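(* Let $G$ be a finite simple graph with $n=|V(G)|$, and let $v_1,\dots,v_r$, $r\ge 2$, be a $\beta$-sequence in $G$ such that $N(v_1,\dots,v_{r-1})$ is a $\delta$-set in $G$. Then $r\ge W(G)$.
   Context: Graphs are finite, undirected, without loops or multiple edges; $N(v)$ is the set of vertices adjacent to $v$, $d(v)=|N(v)|$, and $N(v_1,\dots,v_k)=\bigcap_{j=1}^k N(v_j)$. Define $W(G)=\sum_{v\in V(G)}\frac{1}{n-d(v)}$. A set $V\subseteq V(G)$ is a $\delta$-set in $G$ if $d(v)\le n-|V|$ for all $v\in V$. A sequence $v_1,\dots,v_r$ of vertices is a $\beta$-sequence in $G$ if (i) $d(v_1)=\max\{d(v)\mid v\in V(G)\}$, and (ii) for $2\le i\le r$, $v_i\in N(v_1,\dots,v_{i-1})$ and $d(v_i)=\max\{d(v)\mid v\in N(v_1,\dots,v_{i-1})\}$ (degrees taken in $G$). *)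

theory Defs
  imports Complex_Main
begin

definition simple_graph :: "'a set \<Rightarrow> ('a \<Rightarrow> 'a \<Rightarrow> bool) \<Rightarrow> bool" where
  "simple_graph V E \<longleftrightarrow> finite V \<and> (\<forall>u v. E u v \<longrightarrow> u \<in> V \<and> v \<in> V)
     \<and> (\<forall>u v. E u v \<longrightarrow> E v u) \<and> (\<forall>v. \<not> E v v)"

definition nbhd :: "'a set \<Rightarrow> ('a \<Rightarrow> 'a \<Rightarrow> bool) \<Rightarrow> 'a \<Rightarrow> 'a set" where
  "nbhd V E v = {u \<in> V. E v u}"

definition deg :: "'a set \<Rightarrow> ('a \<Rightarrow> 'a \<Rightarrow> bool) \<Rightarrow> 'a \<Rightarrow> nat" where
  "deg V E v = card (nbhd V E v)"

definition common_nbhd :: "'a set \<Rightarrow> ('a \<Rightarrow> 'a \<Rightarrow> bool) \<Rightarrow> 'a list \<Rightarrow> 'a set" where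
  "common_nbhd V E vs = (\<Inter>v\<in>set vs. nbhd V E v)"

definition W :: "'a set \<Rightarrow> ('a \<Rightarrow> 'a \<Rightarrow> bool) \<Rightarrow> real" where
  "W V E = (\<Sum>v\<in>V. 1 / (real (card V) - real (deg V E v)))"

definition delta_set :: "'a set \<Rightarrow> ('a \<Rightarrow> 'a \<Rightarrow> bool) \<Rightarrow> 'a set \<Rightarrow> bool" where
  "delta_set V E S \<longleftrightarrow> S \<subseteq> V \<and> (\<forall>v\<in>S. deg V E v \<le> card V - card S)"

text \<open>beta-sequence v_1,...,v_r given as the list vs = [v_1,...,v_r]
(0-based: vs!0 = v_1).\<close>
definition beta_sequence :: "'a set \<Rightarrow> ('a \<Rightarrow> 'a \<Rightarrow> bool) \<Rightarrow> 'a list \<Rightarrow> bool" where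
  "beta_sequence V E vs \<longleftrightarrow> vs \<noteq> [] \<and>
     vs ! 0 \<in> V \<and> deg V E (vs ! 0) = Max (deg V E ` V) \<and>
     (\<forall>i. 1 \<le> i \<and> i < length vs \<longrightarrow>
        vs ! i \<in> common_nbhd V E (take i vs) \<and>
        deg V E (vs ! i) = Max (deg V E ` common_nbhd V E (take i vs)))"

end

theory Submission
  imports Defs
begin

definition fW :: "'a set \<Rightarrow> ('a \<Rightarrow> 'a \<Rightarrow> bool) \<Rightarrow> 'a set \<Rightarrow> real" where
  "fW V E X = (\<Sum>u\<in>X. 1 / (real (card V) - real (deg V E u)))"

lemma deg_less:
  assumes "simple_graph V E" "v \<in> V"
  shows "deg V E v < card V"
proof -
  have f: "finite V" using assms(1) by (simp add: simple_graph_def)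
  have "nbhd V E v \<subseteq> V - {v}" using assms by (auto simp: nbhd_def simple_graph_def)
  hence "card (nbhd V E v) \<le> card (V - {v})" using f by (intro card_mono) auto
  also have "\<dots> < card V" using f assms(2) by (meson card_Diff1_less)
  finally show ?thesis by (simp add: deg_def)
qed

lemma piece:
  assumes G: "simple_graph V E" and X: "X \<subseteq> V" and v: "v \<in> X"
    and mx: "\<forall>u\<in>X. deg V E u \<le> deg V E v"
  shows "fW V E (X - nbhd V E v) \<le> 1"
proof -
  have f: "finite V" using G by (simp add: simple_graph_def)
  have vV: "v \<in> V" using X v by auto
  have lt: "deg V E v < card V" using deg_less[OF G vV] .
  define D where "D = real (card V) - real (deg V E v)"
  have Dpos: "D > 0" using lt by (simp add: D_def)
  have "fW V E (X - nbhd V E v) \<le> (\<Sum>u\<in>X - nbhd V E v. 1 / D)"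
    unfolding fW_def
  proof (rule sum_mono)
    fix u assume u: "u \<in> X - nbhd V E v"
    have "deg V E u \<le> deg V E v" using mx u by auto
    hence "D \<le> real (card V) - real (deg V E u)" by (simp add: D_def)
    thus "1 / (real (card V) - real (deg V E u)) \<le> 1 / D"
      using Dpos by (intro divide_left_mono) auto
  qed
  also have "\<dots> = real (card (X - nbhd V E v)) / D" by simp
  also have "\<dots> \<le> D / D"
  proof -
    have "card (X - nbhd V E v) \<le> card (V - nbhd V E v)"
      using f X by (intro card_mono) auto
    also have "\<dots> = card V - deg V E v"
      using f by (simp add: deg_def card_Diff_subset nbhd_def finite_subset)
    finally have "real (card (X - nbhd V E v)) \<le> D" using lt by (simp add: D_def)
    thus ?thesis using Dpos by (intro divide_right_mono) auto
  qed
  also have "\<dots> = 1" using Dpos by simp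
  finally show ?thesis .
qed

theorem theorem3:
  fixes V :: "'a set" and E :: "'a \<Rightarrow> 'a \<Rightarrow> bool" and vs :: "'a list"
  assumes G: "simple_graph V E"
    and B: "beta_sequence V E vs"
    and L: "length vs \<ge> 2"
    and D: "delta_set V E (common_nbhd V E (butlast vs))"
  shows "real (length vs) \<ge> W V E"
proof -
  have f: "finite V" using G by (simp add: simple_graph_def)
  define A where "A k = V \<inter> common_nbhd V E (take k vs)" for k
  have A0: "A 0 = V" by (simp add: A_def common_nbhd_def)
  have step: "A (Suc k) = A k \<inter> nbhd V E (vs ! k)" if "k < length vs" for k
    using that by (auto simp: A_def common_nbhd_def take_Suc_conv_app_nth)
  have vk: "vs ! k \<in> A k \<and> (\<forall>u\<in>A k. deg V E u \<le> deg V E (vs ! k))"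
    if "k < length vs" for k
  proof (cases "k = 0")
    case True
    thus ?thesis using B f by (auto simp: A0 beta_sequence_def)
  next
    case False
    have sub: "common_nbhd V E (take k vs) \<subseteq> V"
      using False that by (auto simp: common_nbhd_def nbhd_def set_conv_nth)
    hence Ak: "A k = common_nbhd V E (take k vs)" by (auto simp: A_def)
    have fin: "finite (A k)" using sub f Ak finite_subset by auto
    have "vs ! k \<in> common_nbhd V E (take k vs)"
      and "deg V E (vs ! k) = Max (deg V E ` common_nbhd V E (take k vs))"
      using B False that by (auto simp: beta_sequence_def)
    thus ?thesis using fin Ak by auto
  qed
  have ind: "fW V E V \<le> real k + fW V E (A k)" if "k \<le> length vs" for k
    using that
  proof (induction k)
    case 0 thus ?case by (simp add: A0)
  next
    case (Suc k)
    hence k: "k < length vs" by simp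
    have sub: "A k \<subseteq> V" by (auto simp: A_def)
    have finA: "finite (A k)" using sub f finite_subset by auto
    have split: "fW V E (A k) = fW V E (A k - nbhd V E (vs ! k)) + fW V E (A (Suc k))"
    proof -
      have e: "A k = (A k - nbhd V E (vs ! k)) \<union> (A k \<inter> nbhd V E (vs ! k))" by blast
      show ?thesis unfolding fW_def step[OF k]
        by (subst e, rule sum.union_disjoint) (use finA in auto)
    qed
    have "fW V E (A k - nbhd V E (vs ! k)) \<le> 1"
      using piece[OF G sub] vk[OF k] by auto
    thus ?case using Suc split by simp
  qed
  define r where "r = length vs"
  have i1: "fW V E V \<le> real (r - 1) + fW V E (A (r - 1))"
    using ind[of "r - 1"] by (simp add: r_def)
  have sub: "common_nbhd V E (butlast vs) \<subseteq> V" using D by (simp add: delta_set_def)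
  have AS: "A (r - 1) = common_nbhd V E (butlast vs)"
    using sub by (auto simp: A_def r_def butlast_conv_take)
  define S where "S = common_nbhd V E (butlast vs)"
  have finS: "finite S" using sub f finite_subset S_def by auto
  have last: "fW V E S \<le> 1"
  proof (cases "S = {}")
    case True thus ?thesis by (simp add: fW_def)
  next
    case False
    have cpos: "card S > 0" using False finS by auto
    have "fW V E S \<le> (\<Sum>u\<in>S. 1 / real (card S))"
      unfolding fW_def
    proof (rule sum_mono)
      fix u assume u: "u \<in> S"
      have "deg V E u \<le> card V - card S" using D u by (auto simp: delta_set_def S_def)
      moreover have "card S \<le> card V" using sub f S_def by (simp add: card_mono)
      ultimately have "real (card S) \<le> real (card V) - real (deg V E u)" by linarith
      thus "1 / (real (card V) - real (deg V E u)) \<le> 1 / real (card S)"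
        using cpos by (intro divide_left_mono) auto
    qed
    also have "\<dots> = 1" using cpos by simp
    finally show ?thesis .
  qed
  have "W V E = fW V E V" by (simp add: W_def fW_def)
  also have "\<dots> \<le> real (r - 1) + 1" using i1 AS last S_def by simp
  also have "\<dots> = real r" using L r_def by simp
  finally show ?thesis by (simp add: r_def)
qed

end
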